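(* Let $\theta\in\mathbb{R}$, let $G$ be a graph with maximum degree at most $D$ and $u$ a vertex of $G$. Then: if $u$ is $\theta$-positive, $\sum_{v\ne u}\big(\nu_{G-u,v}(\{\theta\})-\nu_{G,v}(\{\theta\})\big)=1$; if $u$ is $\theta$-neutral, $\sum_{v\ne u}\big(\nu_{G-u,v}(\{\theta\})-\nu_{G,v}(\{\theta\})\big)=0$; if $u$ is $\theta$-essential, $\sum_{v\in V(G)}\big(\nu_{G-u,v}(\{\theta\})-\nu_{G,v}(\{\theta\})\big)=-1$, with the convention $\nu_{G-u,u}(\{\theta\})=0$.
   Context: Matching measure: for a (not necessarily connected) graph $G$ and vertex $u$, $\nu_{G,u}$ is the spectral measure at the one-vertex path $u$ of the adjacency operator of the path tree $T(G,u)$ (vertices: finite paths in $G$ starting at $u$; two paths adjacent iff one is obtained from the other by deleting its last vertex). $G-u$ is $G$ with $u$ deleted. $u$ is $\theta$-essential if $\nu_{G,u}(\{\theta\})>0$; $\theta$-positive if $\sum_{v\sim u}\nu_{G-u,v}(\{\theta\})>0$ (sum over neighbors of $u$); $\theta$-neutral if it is not $\theta$-essential and $\sum_{v\sim u}\nu_{G-u,v}(\{\theta\})=0$. *)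

theory Defs
  imports Complex_Main
begin

text \<open>A finite graph is given by a finite vertex set V and a symmetric irreflexive
adjacency relation E.  The graph G - u is (V - {u}, E): paths are required to stay
inside the vertex set, so edges at u become irrelevant.\<close>

definition path_tree_vertices :: "'a set \<Rightarrow> ('a \<Rightarrow> 'a \<Rightarrow> bool) \<Rightarrow> 'a \<Rightarrow> 'a list set" where
  "path_tree_vertices V E u =
     {xs. xs \<noteq> [] \<and> hd xs = u \<and> distinct xs \<and> set xs \<subseteq> V \<and>
          (\<forall>i. Suc i < length xs \<longrightarrow> E (xs ! i) (xs ! Suc i))}"

definition path_tree_adj :: "'a list \<Rightarrow> 'a list \<Rightarrow> bool" where
  "path_tree_adj xs ys \<longleftrightarrow> (\<exists>v. ys = xs @ [v]) \<or> (\<exists>v. xs = ys @ [v])"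

definition path_tree_op :: "'a set \<Rightarrow> ('a \<Rightarrow> 'a \<Rightarrow> bool) \<Rightarrow> 'a \<Rightarrow> ('a list \<Rightarrow> real) \<Rightarrow> 'a list \<Rightarrow> real" where
  "path_tree_op V E u f xs =
     (\<Sum>ys\<in>{ys\<in>path_tree_vertices V E u. path_tree_adj xs ys}. f ys)"

definition eigenspace_pt :: "'a set \<Rightarrow> ('a \<Rightarrow> 'a \<Rightarrow> bool) \<Rightarrow> 'a \<Rightarrow> real \<Rightarrow> ('a list \<Rightarrow> real) set" where
  "eigenspace_pt V E u \<theta> =
     {f. (\<forall>xs. xs \<notin> path_tree_vertices V E u \<longrightarrow> f xs = 0) \<and>
         (\<forall>xs\<in>path_tree_vertices V E u. path_tree_op V E u f xs = \<theta> * f xs)}"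

text \<open>Spectral measure of the point {theta} at the root [u]:
  nu_{G,u}({theta}) = < e_root, E({theta}) e_root >, where E({theta}) is the orthogonal
  projection onto the theta-eigenspace (inner product = sum over path tree vertices).\<close>
definition matching_atom :: "'a set \<Rightarrow> ('a \<Rightarrow> 'a \<Rightarrow> bool) \<Rightarrow> 'a \<Rightarrow> real \<Rightarrow> real" where
  "matching_atom V E u \<theta> =
     (let P = path_tree_vertices V E u;
          e = (\<lambda>xs. if xs = [u] \<and> xs \<in> P then 1 else 0 :: real);
          K = eigenspace_pt V E u \<theta>;
          p = (THE p. p \<in> K \<and> (\<forall>g\<in>K. (\<Sum>xs\<in>P. (e xs - p xs) * g xs) = 0))
      in (\<Sum>xs\<in>P. e xs * p xs))"

definition essential :: "'a set \<Rightarrow> ('a \<Rightarrow> 'a \<Rightarrow> bool) \<Rightarrow> real \<Rightarrow> 'a \<Rightarrow> bool" where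
  "essential V E \<theta> u \<longleftrightarrow> matching_atom V E u \<theta> > 0"

definition nbr_atom_sum :: "'a set \<Rightarrow> ('a \<Rightarrow> 'a \<Rightarrow> bool) \<Rightarrow> real \<Rightarrow> 'a \<Rightarrow> real" where
  "nbr_atom_sum V E \<theta> u = (\<Sum>v\<in>{v\<in>V. E u v}. matching_atom (V - {u}) E v \<theta>)"

definition positive_vtx :: "'a set \<Rightarrow> ('a \<Rightarrow> 'a \<Rightarrow> bool) \<Rightarrow> real \<Rightarrow> 'a \<Rightarrow> bool" where
  "positive_vtx V E \<theta> u \<longleftrightarrow> nbr_atom_sum V E \<theta> u > 0"

definition neutral_vtx :: "'a set \<Rightarrow> ('a \<Rightarrow> 'a \<Rightarrow> bool) \<Rightarrow> real \<Rightarrow> 'a \<Rightarrow> bool" where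
  "neutral_vtx V E \<theta> u \<longleftrightarrow> \<not> essential V E \<theta> u \<and> nbr_atom_sum V E \<theta> u = 0"

end

theory Submission
  imports Defs "HOL-Computational_Algebra.Polynomial"
begin



lemma poly_decomp:
  fixes p :: "real poly" assumes "p \<noteq> 0"
  obtains q where "p = [:-a,1:] ^ order a p * q" "poly q a \<noteq> 0"
  using order_decomp[OF assms, of a] poly_eq_0_iff_dvd by blast

lemma poly_lin_pow: "poly ([:-a,1:] ^ n) x = (x - a) ^ n" for a x :: real
  by (simp add: poly_power)

lemma tendsto_poly_at: "((\<lambda>x. poly q x) \<longlongrightarrow> poly q a) (at (a::real))"
  by (intro tendsto_intros)

lemma eventually_ne_at: "eventually (\<lambda>x. x \<noteq> (a::real)) (at a)"
  by (simp add: eventually_at_filter)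

lemma eventually_poly_nz:
  fixes p :: "real poly" assumes "p \<noteq> 0"
  shows "eventually (\<lambda>x. poly p x \<noteq> 0) (at a)"
proof -
  obtain q where q: "p = [:-a,1:] ^ order a p * q" "poly q a \<noteq> 0" using poly_decomp[OF assms] .
  have "eventually (\<lambda>x. poly q x \<noteq> 0) (at a)"
    using tendsto_imp_eventually_ne[OF tendsto_poly_at q(2)] .
  then show ?thesis using eventually_ne_at
    by eventually_elim (subst q(1), simp add: poly_lin_pow)
qed

lemma ratio_lim:
  fixes p q :: "real poly"
  assumes p: "p \<noteq> 0" and q: "q \<noteq> 0" and ord: "order a q \<le> order a p"
  shows "\<exists>L. ((\<lambda>x. poly p x / poly q x) \<longlongrightarrow> L) (at a) \<and> (L \<noteq> 0 \<longleftrightarrow> order a p = order a q)"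
proof -
  obtain p0 where p0: "p = [:-a,1:] ^ order a p * p0" "poly p0 a \<noteq> 0" using poly_decomp[OF p] .
  obtain q0 where q0: "q = [:-a,1:] ^ order a q * q0" "poly q0 a \<noteq> 0" using poly_decomp[OF q] .
  define k where "k = order a p - order a q"
  have pk: "order a p = order a q + k" using ord unfolding k_def by simp
  define h where "h = (\<lambda>x. (x - a) ^ k * poly p0 x / poly q0 x)"
  have lim: "(h \<longlongrightarrow> (a - a) ^ k * poly p0 a / poly q0 a) (at a)"
    unfolding h_def by (intro tendsto_intros q0(2))
  have ev: "eventually (\<lambda>x. h x = poly p x / poly q x) (at a)"
    using eventually_ne_at
  proof eventually_elim
    case (elim x)
    then have "(x - a) ^ order a q \<noteq> 0" by simp
    then show ?case using elim unfolding h_def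
      by (subst p0(1), subst q0(1), simp add: poly_lin_pow pk power_add)
  qed
  have "((\<lambda>x. poly p x / poly q x) \<longlongrightarrow> (a - a) ^ k * poly p0 a / poly q0 a) (at a)"
    using tendsto_cong[OF ev] lim by simp
  moreover have "((a - a) ^ k * poly p0 a / poly q0 a \<noteq> 0) \<longleftrightarrow> order a p = order a q"
    using p0(2) q0(2) pk by (cases k) auto
  ultimately show ?thesis by blast
qed

lemma ratio_lim_conv:
  fixes p q :: "real poly"
  assumes p: "p \<noteq> 0" and q: "q \<noteq> 0" and lim: "((\<lambda>x. poly p x / poly q x) \<longlongrightarrow> L) (at a)"
  shows "order a q \<le> order a p \<and> (L \<noteq> 0 \<longleftrightarrow> order a p = order a q)"
proof -
  have ord: "order a q \<le> order a p"
  proof (rule ccontr)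
    assume "\<not> order a q \<le> order a p"
    then obtain k where k: "order a q = order a p + Suc k" by (metis add_Suc_right less_imp_Suc_add not_le)
    obtain p0 where p0: "p = [:-a,1:] ^ order a p * p0" "poly p0 a \<noteq> 0" using poly_decomp[OF p] .
    obtain q0 where q0: "q = [:-a,1:] ^ order a q * q0" "poly q0 a \<noteq> 0" using poly_decomp[OF q] .
    have ev: "eventually (\<lambda>x. (x - a) ^ Suc k * (poly p x / poly q x) = poly p0 x / poly q0 x) (at a)"
      using eventually_ne_at
    proof eventually_elim
      case (elim x)
      then have nz: "(x - a) ^ order a p \<noteq> 0" "(x - a) ^ Suc k \<noteq> 0" by simp_all
      have e1: "poly p x = (x - a)^order a p * poly p0 x" by (subst p0(1)) (simp add: poly_lin_pow)
      have e2: "poly q x = (x - a)^order a p * ((x - a)^Suc k * poly q0 x)"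
        by (subst q0(1)) (simp add: poly_lin_pow k power_add[symmetric] del: power_Suc)
      show ?case unfolding e1 e2 using nz
        by (cases "poly q0 x = 0") (simp_all add: field_simps del: power_Suc)
    qed
    have l1: "((\<lambda>x. (x - a) ^ Suc k * (poly p x / poly q x)) \<longlongrightarrow> (a - a) ^ Suc k * L) (at a)"
      by (intro tendsto_intros lim)
    have l2: "((\<lambda>x. (x - a) ^ Suc k * (poly p x / poly q x)) \<longlongrightarrow> poly p0 a / poly q0 a) (at a)"
      using tendsto_cong[OF ev] by (simp add: tendsto_intros q0(2))
    have "(a - a) ^ Suc k * L = poly p0 a / poly q0 a"
      using tendsto_unique[OF _ l1 l2] by simp
    then show False using p0(2) q0(2) by simp
  qed
  obtain L' where L': "((\<lambda>x. poly p x / poly q x) \<longlongrightarrow> L') (at a)" "(L' \<noteq> 0 \<longleftrightarrow> order a p = order a q)"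
    using ratio_lim[OF p q ord] by blast
  have "L = L'" using tendsto_unique[OF _ lim L'(1)] by simp
  then show ?thesis using ord L'(2) by simp
qed

lemma gen_pderiv_pow:
  fixes r :: "real poly" assumes pr: "pderiv r = 1"
  shows "r * pderiv (r ^ m) = smult (of_nat m) (r ^ m)"
proof (induction m)
  case 0 then show ?case by simp
next
  case (Suc m)
  have "pderiv (r ^ Suc m) = r ^ m + r * pderiv (r ^ m)"
    by (simp only: power_Suc pderiv_mult pr mult_1_right add.commute)
  then have "r * pderiv (r ^ Suc m) = r ^ Suc m + r * (r * pderiv (r ^ m))"
    by (simp add: algebra_simps)
  also have "\<dots> = smult (of_nat (Suc m)) (r ^ Suc m)"
    unfolding Suc by (simp add: algebra_simps smult_add_left)
  finally show ?case .
qed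

lemma lin_pderiv_pow: "[:-a,1:] * pderiv ([:-a,1:] ^ m) = smult (of_nat m) ([:-a,1:] ^ m :: real poly)"
  by (rule gen_pderiv_pow) (simp add: pderiv_pCons)

lemma log_deriv_lim:
  fixes p :: "real poly" assumes p: "p \<noteq> 0"
  shows "((\<lambda>x. poly ([:-a,1:] * pderiv p) x / poly p x) \<longlongrightarrow> real (order a p)) (at a)"
proof -
  define m where "m = order a p"
  obtain q where q: "p = [:-a,1:] ^ m * q" "poly q a \<noteq> 0" using poly_decomp[OF p] unfolding m_def .
  have d: "[:-a,1:] * pderiv p = [:-a,1:] ^ m * ([:-a,1:] * pderiv q + smult (of_nat m) q)"
  proof -
    have "[:-a,1:] * pderiv p = [:-a,1:] ^ m * ([:-a,1:] * pderiv q) + q * ([:-a,1:] * pderiv ([:-a,1:] ^ m))"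
      by (subst q(1)) (simp add: pderiv_mult algebra_simps)
    also have "\<dots> = [:-a,1:] ^ m * ([:-a,1:] * pderiv q + smult (of_nat m) q)"
      unfolding lin_pderiv_pow by (simp add: algebra_simps)
    finally show ?thesis .
  qed
  define h where "h = (\<lambda>x. ((x - a) * poly (pderiv q) x + real m * poly q x) / poly q x)"
  have lim: "(h \<longlongrightarrow> ((a - a) * poly (pderiv q) a + real m * poly q a) / poly q a) (at a)"
    unfolding h_def by (intro tendsto_intros q(2))
  have ev: "eventually (\<lambda>x. h x = poly ([:-a,1:] * pderiv p) x / poly p x) (at a)"
    using eventually_ne_at
  proof eventually_elim
    case (elim x)
    then have "(x - a) ^ m \<noteq> 0" by simp
    have e1: "poly p x = (x - a)^m * poly q x" by (subst q(1)) (simp add: poly_lin_pow)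
    have e2: "poly ([:-a,1:] * pderiv p) x = (x - a)^m * ((x - a) * poly (pderiv q) x + real m * poly q x)"
      unfolding d by (simp add: poly_lin_pow algebra_simps)
    show ?case unfolding h_def e1 e2 using \<open>(x - a) ^ m \<noteq> 0\<close> by simp
  qed
  show ?thesis using tendsto_cong[OF ev] lim q(2) unfolding m_def by simp
qed



lemma chain_snoc:
  assumes "xs \<noteq> []"
  shows "(\<forall>i. Suc i < length (xs @ [w]) \<longrightarrow> E ((xs @ [w]) ! i) ((xs @ [w]) ! Suc i)) \<longleftrightarrow>
         (\<forall>i. Suc i < length xs \<longrightarrow> E (xs ! i) (xs ! Suc i)) \<and> E (last xs) w"
proof
  assume H: "\<forall>i. Suc i < length (xs @ [w]) \<longrightarrow> E ((xs @ [w]) ! i) ((xs @ [w]) ! Suc i)"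
  have "\<forall>i. Suc i < length xs \<longrightarrow> E (xs ! i) (xs ! Suc i)"
  proof (intro allI impI)
    fix i assume i: "Suc i < length xs"
    then have lt: "Suc i < length (xs @ [w])" by simp
    then have "E ((xs @ [w]) ! i) ((xs @ [w]) ! Suc i)" using H by blast
    then show "E (xs ! i) (xs ! Suc i)" using i by (simp add: nth_append)
  qed
  moreover have "E (last xs) w"
  proof -
    define n where "n = length xs - 1"
    have n: "Suc n = length xs" using assms unfolding n_def by (cases xs) auto
    have lt: "Suc n < length (xs @ [w])" using n by simp
    have "E ((xs @ [w]) ! n) ((xs @ [w]) ! Suc n)" using H lt by blast
    then show ?thesis using n assms by (simp add: nth_append last_conv_nth n_def)
  qed
  ultimately show "(\<forall>i. Suc i < length xs \<longrightarrow> E (xs ! i) (xs ! Suc i)) \<and> E (last xs) w" by blast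
next
  assume H: "(\<forall>i. Suc i < length xs \<longrightarrow> E (xs ! i) (xs ! Suc i)) \<and> E (last xs) w"
  show "\<forall>i. Suc i < length (xs @ [w]) \<longrightarrow> E ((xs @ [w]) ! i) ((xs @ [w]) ! Suc i)"
  proof (intro allI impI)
    fix i assume i: "Suc i < length (xs @ [w])"
    show "E ((xs @ [w]) ! i) ((xs @ [w]) ! Suc i)"
    proof (cases "Suc i < length xs")
      case True then show ?thesis using H by (simp add: nth_append)
    next
      case False
      then have si: "Suc i = length xs" using i by simp
      then have "i = length xs - 1" by simp
      then show ?thesis using H assms si by (simp add: nth_append last_conv_nth)
    qed
  qed
qed

lemma ptv_iff: "xs \<in> path_tree_vertices V E u \<longleftrightarrow> xs \<noteq> [] \<and> hd xs = u \<and> distinct xs \<and> set xs \<subseteq> V \<and>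
          (\<forall>i. Suc i < length xs \<longrightarrow> E (xs ! i) (xs ! Suc i))"
  unfolding path_tree_vertices_def by simp

lemma pt_snoc:
  assumes "xs \<in> path_tree_vertices V E u"
  shows "xs @ [w] \<in> path_tree_vertices V E u \<longleftrightarrow> w \<in> V \<and> w \<notin> set xs \<and> E (last xs) w"
proof -
  have ne: "xs \<noteq> []" using assms unfolding ptv_iff by simp
  then have "hd (xs @ [w]) = hd xs" by simp
  then show ?thesis using assms chain_snoc[OF ne, of w E] unfolding ptv_iff by auto
qed

lemma pt_prefix:
  assumes "xs @ [w] \<in> path_tree_vertices V E u" "xs \<noteq> []"
  shows "xs \<in> path_tree_vertices V E u"
  using assms chain_snoc[OF assms(2), of w E] unfolding ptv_iff by auto

lemma pt_root: "u \<in> V \<Longrightarrow> [u] \<in> path_tree_vertices V E u"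
  unfolding ptv_iff by simp

lemma pt_finite: assumes "finite V" shows "finite (path_tree_vertices V E u)"
proof -
  have "path_tree_vertices V E u \<subseteq> {xs. set xs \<subseteq> V \<and> length xs \<le> card V}"
  proof
    fix xs assume "xs \<in> path_tree_vertices V E u"
    then have "distinct xs" "set xs \<subseteq> V" unfolding ptv_iff by auto
    then show "xs \<in> {xs. set xs \<subseteq> V \<and> length xs \<le> card V}"
      using assms by (metis card_mono distinct_card mem_Collect_eq)
  qed
  then show ?thesis using finite_lists_length_le[OF assms] by (rule finite_subset)
qed

lemma pt_nbrs:
  assumes q: "q \<in> path_tree_vertices V E u"
  shows "{q' \<in> path_tree_vertices V E u. path_tree_adj q q'} =
     (\<lambda>w. q @ [w]) ` {w \<in> V - set q. E (last q) w} \<union> (if q = [u] then {} else {butlast q})"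
proof -
  have qne: "q \<noteq> []" and hq: "hd q = u" using q unfolding ptv_iff by auto
  show ?thesis
  proof (intro equalityI subsetI)
    fix q' assume "q' \<in> {q' \<in> path_tree_vertices V E u. path_tree_adj q q'}"
    then have q': "q' \<in> path_tree_vertices V E u" "path_tree_adj q q'" by auto
    from q'(2) show "q' \<in> (\<lambda>w. q @ [w]) ` {w \<in> V - set q. E (last q) w} \<union> (if q = [u] then {} else {butlast q})"
      unfolding path_tree_adj_def
    proof
      assume "\<exists>w. q' = q @ [w]"
      then obtain w where w: "q' = q @ [w]" by blast
      then have "w \<in> V \<and> w \<notin> set q \<and> E (last q) w" using pt_snoc[OF q] q'(1) by simp
      then show ?thesis using w by blast
    next
      assume "\<exists>w. q = q' @ [w]"
      then obtain w where w: "q = q' @ [w]" by blast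
      have "q' \<noteq> []" using q'(1) unfolding ptv_iff by simp
      then have "q \<noteq> [u]" using w by (cases q') auto
      moreover have "q' = butlast q" using w by simp
      ultimately show ?thesis by simp
    qed
  next
    fix q' assume H: "q' \<in> (\<lambda>w. q @ [w]) ` {w \<in> V - set q. E (last q) w} \<union> (if q = [u] then {} else {butlast q})"
    show "q' \<in> {q' \<in> path_tree_vertices V E u. path_tree_adj q q'}"
    proof (cases "q' \<in> (\<lambda>w. q @ [w]) ` {w \<in> V - set q. E (last q) w}")
      case True
      then obtain w where w: "q' = q @ [w]" "w \<in> V" "w \<notin> set q" "E (last q) w" by blast
      then have "q' \<in> path_tree_vertices V E u" using pt_snoc[OF q] by simp
      then show ?thesis using w(1) unfolding path_tree_adj_def by simp
    next
      case False
      then have "q \<noteq> [u]" "q' = butlast q" using H by (auto split: if_splits)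
      have "length q \<noteq> 1" using \<open>q \<noteq> [u]\<close> qne hq by (cases q) auto
      then have bne: "butlast q \<noteq> []" using qne by (cases q rule: rev_cases) auto
      have qq: "q = butlast q @ [last q]" using qne by simp
      have "butlast q \<in> path_tree_vertices V E u" using pt_prefix[of "butlast q" "last q"] qq q bne by simp
      moreover have "path_tree_adj q (butlast q)" unfolding path_tree_adj_def using qq by blast
      ultimately show ?thesis using \<open>q' = butlast q\<close> by simp
    qed
  qed
qed

lemma nbr_sum:
  assumes q: "q \<in> path_tree_vertices V E u" and fin: "finite V"
  shows "(\<Sum>q'\<in>{q' \<in> path_tree_vertices V E u. path_tree_adj q q'}. f q') =
     (\<Sum>w\<in>{w \<in> V - set q. E (last q) w}. f (q @ [w])) + (if q = [u] then 0 else f (butlast q))"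
proof -
  have qne: "q \<noteq> []" using q unfolding ptv_iff by simp
  have disj: "(\<lambda>w. q @ [w]) ` {w \<in> V - set q. E (last q) w} \<inter> (if q = [u] then {} else {butlast q}) = {}"
  proof -
    have "\<forall>w. q @ [w] \<noteq> butlast q"
    proof
      fix w show "q @ [w] \<noteq> butlast q"
      proof
        assume "q @ [w] = butlast q"
        then have "length (q @ [w]) = length (butlast q)" by simp
        then show False by simp
      qed
    qed
    then show ?thesis by auto
  qed
  have inj: "inj_on (\<lambda>w. q @ [w]) {w \<in> V - set q. E (last q) w}" by (rule inj_onI) simp
  have r: "(\<Sum>q'\<in>(\<lambda>w. q @ [w]) ` {w \<in> V - set q. E (last q) w}. f q') = (\<Sum>w\<in>{w \<in> V - set q. E (last q) w}. f (q @ [w]))"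
    using sum.reindex[OF inj, of f] by (simp add: o_def)
  show ?thesis
    unfolding pt_nbrs[OF q]
    by (subst sum.union_disjoint) (use fin disj r in auto)
qed



lemma adj_sym: "path_tree_adj a b = path_tree_adj b a"
  unfolding path_tree_adj_def by blast

lemma op_symm:
  assumes fin: "finite P" and Rs: "\<And>a b. R a b = R b a"
  shows "(\<Sum>q\<in>P. f q * (\<Sum>q'\<in>{q'\<in>P. R q q'}. h q')) = (\<Sum>q\<in>P. h q * (\<Sum>q'\<in>{q'\<in>P. R q q'}. (f q' :: real)))"
proof -
  have "(\<Sum>q\<in>P. f q * (\<Sum>q'\<in>{q'\<in>P. R q q'}. h q')) = (\<Sum>q\<in>P. \<Sum>q'\<in>{q'\<in>P. R q q'}. f q * h q')"
    by (simp add: sum_distrib_left)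
  also have "\<dots> = (\<Sum>q'\<in>P. \<Sum>q\<in>{q\<in>P. R q q'}. f q * h q')"
    by (rule sum.swap_restrict[OF fin fin])
  also have "\<dots> = (\<Sum>q'\<in>P. h q' * (\<Sum>q\<in>{q\<in>P. R q' q}. f q))"
    by (simp add: sum_distrib_left Rs mult.commute)
  finally show ?thesis .
qed


lemma limit_eigen:
  fixes w :: "real \<Rightarrow> 'b \<Rightarrow> real" and vv ee :: "'b \<Rightarrow> real"
  assumes fin: "finite P" and Rs: "\<And>a b. R a b = R b a"
    and lim: "\<And>q. q \<in> P \<Longrightarrow> ((\<lambda>x. w x q) \<longlongrightarrow> vv q) (at \<theta>)"
    and ev: "eventually (\<lambda>x. \<forall>q\<in>P. x * w x q - (\<Sum>q'\<in>{q'\<in>P. R q q'}. w x q') = (x - \<theta>) ^ Suc d * ee q) (at \<theta>)"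
  shows limit_eigen1: "\<forall>q\<in>P. (\<Sum>q'\<in>{q'\<in>P. R q q'}. vv q') = \<theta> * vv q"
    and limit_eigen2: "\<And>k. \<forall>q\<in>P. (\<Sum>q'\<in>{q'\<in>P. R q q'}. k q') = \<theta> * k q \<Longrightarrow>
        (\<Sum>q\<in>P. vv q * k q) = (if d = 0 then (\<Sum>q\<in>P. ee q * k q) else 0)"
proof -
  show eig: "\<forall>q\<in>P. (\<Sum>q'\<in>{q'\<in>P. R q q'}. vv q') = \<theta> * vv q"
  proof
    fix q assume q: "q \<in> P"
    have L1: "((\<lambda>x. x * w x q - (\<Sum>q'\<in>{q'\<in>P. R q q'}. w x q')) \<longlongrightarrow> \<theta> * vv q - (\<Sum>q'\<in>{q'\<in>P. R q q'}. vv q')) (at \<theta>)"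
    proof -
      have Ls: "((\<lambda>x. \<Sum>q'\<in>{q'\<in>P. R q q'}. w x q') \<longlongrightarrow> (\<Sum>q'\<in>{q'\<in>P. R q q'}. vv q')) (at \<theta>)"
        by (rule tendsto_sum) (auto intro: lim)
      show ?thesis by (intro tendsto_diff tendsto_mult tendsto_ident_at lim[OF q] Ls)
    qed
    have ev1: "eventually (\<lambda>x. (x - \<theta>) ^ Suc d * ee q = x * w x q - (\<Sum>q'\<in>{q'\<in>P. R q q'}. w x q')) (at \<theta>)"
      using ev by eventually_elim (use q in auto)
    have L2: "((\<lambda>x. (x - \<theta>) ^ Suc d * ee q) \<longlongrightarrow> (\<theta> - \<theta>) ^ Suc d * ee q) (at \<theta>)"
      by (intro tendsto_intros)
    have L3: "((\<lambda>x. x * w x q - (\<Sum>q'\<in>{q'\<in>P. R q q'}. w x q')) \<longlongrightarrow> 0) (at \<theta>)"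
      using tendsto_cong[OF ev1] L2 by simp
    have "\<theta> * vv q - (\<Sum>q'\<in>{q'\<in>P. R q q'}. vv q') = 0"
      using tendsto_unique[OF _ L1 L3] by simp
    then show "(\<Sum>q'\<in>{q'\<in>P. R q q'}. vv q') = \<theta> * vv q" by simp
  qed
  fix k assume k: "\<forall>q\<in>P. (\<Sum>q'\<in>{q'\<in>P. R q q'}. k q') = \<theta> * k q"
  define B where "B = (\<Sum>q\<in>P. ee q * k q)"
  have ev2: "eventually (\<lambda>x. (x - \<theta>) ^ d * B = (\<Sum>q\<in>P. w x q * k q)) (at \<theta>)"
    using ev eventually_ne_at
  proof (eventually_elim)
    case (elim x)
    have xne: "x - \<theta> \<noteq> 0" using elim(2) by simp
    have "(x - \<theta>) * ((x - \<theta>) ^ d * B) = (\<Sum>q\<in>P. k q * ((x - \<theta>) ^ Suc d * ee q))"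
      unfolding B_def by (simp add: sum_distrib_left algebra_simps)
    also have "\<dots> = (\<Sum>q\<in>P. k q * (x * w x q - (\<Sum>q'\<in>{q'\<in>P. R q q'}. w x q')))"
      using elim(1) by (intro sum.cong) auto
    also have "\<dots> = x * (\<Sum>q\<in>P. w x q * k q) - (\<Sum>q\<in>P. k q * (\<Sum>q'\<in>{q'\<in>P. R q q'}. w x q'))"
      by (simp add: right_diff_distrib sum_subtractf sum_distrib_left mult.commute mult.left_commute)
    also have "(\<Sum>q\<in>P. k q * (\<Sum>q'\<in>{q'\<in>P. R q q'}. w x q')) = (\<Sum>q\<in>P. w x q * (\<Sum>q'\<in>{q'\<in>P. R q q'}. k q'))"
      by (rule op_symm[OF fin Rs])
    also have "\<dots> = (\<Sum>q\<in>P. w x q * (\<theta> * k q))" using k by (intro sum.cong) auto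
    also have "x * (\<Sum>q\<in>P. w x q * k q) - (\<Sum>q\<in>P. w x q * (\<theta> * k q)) = (x - \<theta>) * (\<Sum>q\<in>P. w x q * k q)"
      by (simp add: left_diff_distrib sum_distrib_left sum_subtractf[symmetric] algebra_simps)
    finally have "(x - \<theta>) * ((x - \<theta>) ^ d * B) = (x - \<theta>) * (\<Sum>q\<in>P. w x q * k q)" .
    then show ?case using xne by simp
  qed
  have L1: "((\<lambda>x. \<Sum>q\<in>P. w x q * k q) \<longlongrightarrow> (\<Sum>q\<in>P. vv q * k q)) (at \<theta>)"
    by (rule tendsto_sum) (auto intro: lim tendsto_mult)
  have L2: "((\<lambda>x. (x - \<theta>) ^ d * B) \<longlongrightarrow> (\<theta> - \<theta>) ^ d * B) (at \<theta>)"
    by (intro tendsto_intros)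
  have L3: "((\<lambda>x. \<Sum>q\<in>P. w x q * k q) \<longlongrightarrow> (\<theta> - \<theta>) ^ d * B) (at \<theta>)"
    using tendsto_cong[OF ev2] L2 by simp
  have "(\<Sum>q\<in>P. vv q * k q) = (\<theta> - \<theta>) ^ d * B"
    using tendsto_unique[OF _ L1 L3] by simp
  then show "(\<Sum>q\<in>P. vv q * k q) = (if d = 0 then (\<Sum>q\<in>P. ee q * k q) else 0)"
    unfolding B_def by simp
qed




definition medges :: "'a set \<Rightarrow> ('a \<Rightarrow> 'a \<Rightarrow> bool) \<Rightarrow> 'a set set" where
  "medges S E = {{a,b} | a b. a \<in> S \<and> b \<in> S \<and> E a b}"

definition matchings :: "'a set \<Rightarrow> ('a \<Rightarrow> 'a \<Rightarrow> bool) \<Rightarrow> 'a set set set" where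
  "matchings S E = {M. M \<subseteq> medges S E \<and> (\<forall>e1\<in>M. \<forall>e2\<in>M. e1 \<noteq> e2 \<longrightarrow> e1 \<inter> e2 = {})}"

definition mpoly :: "'a set \<Rightarrow> ('a \<Rightarrow> 'a \<Rightarrow> bool) \<Rightarrow> real poly" where
  "mpoly S E = (\<Sum>M\<in>matchings S E. monom ((-1) ^ card M) (card S - 2 * card M))"

locale gr =
  fixes E :: "'a \<Rightarrow> 'a \<Rightarrow> bool"
  assumes sym: "E x y \<Longrightarrow> E y x" and irr: "\<not> E x x"
begin


lemma finite_medges: "finite S \<Longrightarrow> finite (medges S E)"
proof -
  assume "finite S"
  have "medges S E \<subseteq> (\<lambda>(a,b). {a,b}) ` (S \<times> S)"
    unfolding medges_def by auto
  thus ?thesis using \<open>finite S\<close> by (meson finite_SigmaI finite_imageI finite_subset)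
qed

lemma finite_matchings: "finite S \<Longrightarrow> finite (matchings S E)"
proof -
  assume "finite S"
  have "matchings S E \<subseteq> Pow (medges S E)" unfolding matchings_def by auto
  thus ?thesis using finite_medges[OF \<open>finite S\<close>] by (meson finite_Pow_iff finite_subset)
qed

lemma medges_card: "e \<in> medges S E \<Longrightarrow> card e = 2 \<and> e \<subseteq> S"
  unfolding medges_def using irr by (auto simp: card_insert_if)

lemma matching_finite: "finite S \<Longrightarrow> M \<in> matchings S E \<Longrightarrow> finite M"
  unfolding matchings_def using finite_medges by (blast intro: finite_subset)

lemma matching_card: assumes "finite S" "M \<in> matchings S E" shows "2 * card M \<le> card S"
proof -
  have M: "M \<subseteq> medges S E" "\<forall>e1\<in>M. \<forall>e2\<in>M. e1 \<noteq> e2 \<longrightarrow> e1 \<inter> e2 = {}"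
    using assms(2) unfolding matchings_def by auto
  have c2: "\<And>A. A \<in> M \<Longrightarrow> card A = 2" using M(1) medges_card by blast
  have fin: "\<And>A. A \<in> M \<Longrightarrow> finite A"
  proof -
    fix A assume "A \<in> M"
    then have "card A = 2" by (rule c2)
    then show "finite A" by (intro card_ge_0_finite) simp
  qed
  have pw: "pairwise disjnt M" unfolding pairwise_def disjnt_def using M(2) by blast
  have "card (\<Union>M) = sum card M"
    by (rule card_Union_disjoint[OF pw fin])
  also have "\<dots> = sum (\<lambda>_. 2) M" using c2 by (intro sum.cong) auto
  also have "\<dots> = 2 * card M" by simp
  finally have "card (\<Union>M) = 2 * card M" .
  moreover have "\<Union>M \<subseteq> S" using M(1) medges_card by blast
  moreover have "card (\<Union>M) \<le> card S" using calculation(2) assms(1) by (rule card_mono[rotated])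
  ultimately show ?thesis by simp
qed

lemma medges_diff: "e \<in> medges S E \<Longrightarrow> e \<inter> X = {} \<Longrightarrow> e \<in> medges (S - X) E"
  unfolding medges_def by auto

lemma medges_iff: "e \<in> medges S E \<longleftrightarrow> (\<exists>a b. e = {a,b} \<and> a \<in> S \<and> b \<in> S \<and> E a b)"
  unfolding medges_def by simp

lemma medges_mono: "S \<subseteq> T \<Longrightarrow> medges S E \<subseteq> medges T E"
proof
  fix e assume ST: "S \<subseteq> T" and "e \<in> medges S E"
  then obtain a b where ab: "e = {a,b}" "a \<in> S" "b \<in> S" "E a b" unfolding medges_iff by blast
  then have "a \<in> T" "b \<in> T" using ST by auto
  then show "e \<in> medges T E" unfolding medges_iff using ab by (intro exI[of _ a] exI[of _ b]) simp
qed

lemma matchings_mono: "S \<subseteq> T \<Longrightarrow> matchings S E \<subseteq> matchings T E"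
proof
  fix M assume "S \<subseteq> T" "M \<in> matchings S E"
  then show "M \<in> matchings T E" unfolding matchings_def using medges_mono[of S T] by auto
qed

lemma matching_sub: "M \<in> matchings S E \<Longrightarrow> e \<in> M \<Longrightarrow> e \<subseteq> S"
proof -
  assume "M \<in> matchings S E" "e \<in> M"
  then have "e \<in> medges S E" unfolding matchings_def by auto
  then show "e \<subseteq> S" using medges_card by simp
qed

lemma matchings_split:
  assumes "finite S" "u \<in> S"
  shows "matchings S E = matchings (S - {u}) E \<union>
     (\<Union>w\<in>{w\<in>S - {u}. E u w}. insert {u,w} ` matchings (S - {u} - {w}) E)"
proof
  show "matchings S E \<subseteq> matchings (S - {u}) E \<union>
     (\<Union>w\<in>{w\<in>S - {u}. E u w}. insert {u,w} ` matchings (S - {u} - {w}) E)"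
  proof
    fix M assume MS: "M \<in> matchings S E"
    have M: "M \<subseteq> medges S E" "\<forall>e1\<in>M. \<forall>e2\<in>M. e1 \<noteq> e2 \<longrightarrow> e1 \<inter> e2 = {}"
      using MS unfolding matchings_def by auto
    show "M \<in> matchings (S - {u}) E \<union>
     (\<Union>w\<in>{w\<in>S - {u}. E u w}. insert {u,w} ` matchings (S - {u} - {w}) E)"
    proof (cases "\<exists>e\<in>M. u \<in> e")
      case False
      have "M \<subseteq> medges (S - {u}) E"
      proof
        fix e assume "e \<in> M"
        then show "e \<in> medges (S - {u}) E" using M(1) False medges_diff[of e S "{u}"] by auto
      qed
      then have "M \<in> matchings (S - {u}) E" using M(2) unfolding matchings_def by simp
      then show ?thesis by (rule UnI1)
    next
      case True
      then obtain e where e: "e \<in> M" "u \<in> e" by blast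
      then obtain a b where ab: "e = {a,b}" "a \<in> S" "b \<in> S" "E a b" using M(1) unfolding medges_def by blast
      obtain w where w: "e = {u,w}" "w \<in> S" "E u w"
      proof (cases "a = u")
        case True then show ?thesis using that ab by simp
      next
        case False then have "b = u" using ab e(2) by simp
        then show ?thesis using that[of a] ab sym by (simp add: insert_commute)
      qed
      have wu: "w \<noteq> u" using w irr by auto
      have "M - {e} \<subseteq> medges (S - {u} - {w}) E"
      proof
        fix f assume f: "f \<in> M - {e}"
        then have "f \<inter> e = {}" using M(2) e(1) by auto
        then have "f \<inter> {u,w} = {}" using w(1) by simp
        moreover have "f \<in> medges S E" using f M(1) by auto
        ultimately have "f \<in> medges (S - {u,w}) E" by (rule medges_diff[rotated])
        then show "f \<in> medges (S - {u} - {w}) E" by (simp add: set_diff_eq)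
      qed
      then have "M - {e} \<in> matchings (S - {u} - {w}) E" using M(2) unfolding matchings_def by simp
      moreover have "M = insert {u,w} (M - {e})" using e(1) w(1) by auto
      moreover have "w \<in> {w\<in>S - {u}. E u w}" using w wu by simp
      ultimately show ?thesis by (intro UnI2) (rule UN_I, assumption, rule image_eqI)
    qed
  qed
next
  show "matchings (S - {u}) E \<union>
     (\<Union>w\<in>{w\<in>S - {u}. E u w}. insert {u,w} ` matchings (S - {u} - {w}) E) \<subseteq> matchings S E"
  proof
    fix M assume "M \<in> matchings (S - {u}) E \<union>
     (\<Union>w\<in>{w\<in>S - {u}. E u w}. insert {u,w} ` matchings (S - {u} - {w}) E)"
    then show "M \<in> matchings S E"
    proof
      assume "M \<in> matchings (S - {u}) E"
      then show ?thesis using matchings_mono[of "S - {u}" S] by blast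
    next
      assume "M \<in> (\<Union>w\<in>{w\<in>S - {u}. E u w}. insert {u,w} ` matchings (S - {u} - {w}) E)"
      then obtain w M' where w: "w \<in> S" "w \<noteq> u" "E u w" and M': "M' \<in> matchings (S - {u} - {w}) E"
        and MM: "M = insert {u,w} M'" by blast
      have M'1: "M' \<subseteq> medges (S - {u} - {w}) E" "\<forall>e1\<in>M'. \<forall>e2\<in>M'. e1 \<noteq> e2 \<longrightarrow> e1 \<inter> e2 = {}"
        using M' unfolding matchings_def by auto
      have sub: "\<And>f. f \<in> M' \<Longrightarrow> f \<inter> {u,w} = {}" using matching_sub[OF M'] by blast
      have "{u,w} \<in> medges S E" unfolding medges_def using w assms(2) by blast
      moreover have "M' \<subseteq> medges S E" using M'1(1) medges_mono[of "S - {u} - {w}" S] by blast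
      moreover have "\<forall>e1\<in>M. \<forall>e2\<in>M. e1 \<noteq> e2 \<longrightarrow> e1 \<inter> e2 = {}"
      proof (intro ballI impI)
        fix e1 e2 assume "e1 \<in> M" "e2 \<in> M" "e1 \<noteq> e2"
        then show "e1 \<inter> e2 = {}" unfolding MM using M'1(2) sub by (auto simp: Int_commute)
      qed
      ultimately show ?thesis unfolding matchings_def MM by simp
    qed
  qed
qed

lemma monom_neg: "monom (- c) n = - monom (c::real) n"
  by (simp add: poly_eq_iff)

lemma x_monom: "[:0,1:] * monom (c::real) n = monom c (Suc n)"
  by (simp add: monom_Suc)

lemma mpoly_rec:
  assumes S: "finite S" and u: "u \<in> S"
  shows "mpoly S E = [:0,1:] * mpoly (S - {u}) E - (\<Sum>w\<in>{w\<in>S - {u}. E u w}. mpoly (S - {u} - {w}) E)"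
proof -
  define N where "N = {w\<in>S - {u}. E u w}"
  define A where "A = matchings (S - {u}) E"
  define B where "B = (\<lambda>w. insert {u,w} ` matchings (S - {u} - {w}) E)"
  define f :: "'a set set \<Rightarrow> real poly" where "f = (\<lambda>M. monom ((-1::real) ^ card M) (card S - 2 * card M))"
  have finN: "finite N" using S unfolding N_def by simp
  have finA: "finite A" unfolding A_def using S by (simp add: finite_matchings)
  have finB: "\<And>w. finite (B w)" unfolding B_def using S by (simp add: finite_matchings)
  have split: "matchings S E = A \<union> (\<Union>w\<in>N. B w)"
    unfolding A_def B_def N_def by (rule matchings_split[OF S u])
  have uB: "\<And>w M. w \<in> N \<Longrightarrow> M \<in> B w \<Longrightarrow> {u,w} \<in> M" unfolding B_def by auto
  have notA: "\<And>M. M \<in> A \<Longrightarrow> e \<in> M \<Longrightarrow> u \<notin> e" for e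
    unfolding A_def using matching_sub by blast
  have disj1: "A \<inter> (\<Union>w\<in>N. B w) = {}"
  proof (rule ccontr)
    assume "A \<inter> (\<Union>w\<in>N. B w) \<noteq> {}"
    then obtain M w where "M \<in> A" "w \<in> N" "M \<in> B w" by blast
    then show False using uB notA by blast
  qed
  have disj2: "\<forall>w\<in>N. \<forall>w'\<in>N. w \<noteq> w' \<longrightarrow> B w \<inter> B w' = {}"
  proof (intro ballI impI)
    fix w w' assume w: "w \<in> N" "w' \<in> N" "w \<noteq> w'"
    show "B w \<inter> B w' = {}"
    proof (rule ccontr)
      assume "B w \<inter> B w' \<noteq> {}"
      then obtain M where M: "M \<in> B w" "M \<in> B w'" by blast
      then obtain M2 where M2: "M2 \<in> matchings (S - {u} - {w'}) E" "M = insert {u,w'} M2"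
        unfolding B_def by blast
      have "{u,w} \<in> M" using uB w M by blast
      moreover have "{u,w} \<noteq> {u,w'}" using w unfolding N_def by (auto simp: doubleton_eq_iff)
      ultimately have "{u,w} \<in> M2" using M2 by simp
      then have "{u,w} \<subseteq> S - {u} - {w'}" using matching_sub[OF M2(1)] by blast
      then show False by simp
    qed
  qed
  have "mpoly S E = sum f (A \<union> (\<Union>w\<in>N. B w))" unfolding mpoly_def f_def split ..
  also have "\<dots> = sum f A + sum f (\<Union>w\<in>N. B w)"
    by (rule sum.union_disjoint) (use finA finN finB disj1 in auto)
  also have "sum f (\<Union>w\<in>N. B w) = (\<Sum>w\<in>N. sum f (B w))"
    by (rule sum.UNION_disjoint) (use finN finB disj2 in auto)
  also have "sum f A = [:0,1:] * mpoly (S - {u}) E"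
  proof -
    have "sum f A = (\<Sum>M\<in>A. [:0,1:] * monom ((-1::real) ^ card M) (card (S - {u}) - 2 * card M))"
    proof (rule sum.cong[OF refl])
      fix M assume M: "M \<in> A"
      have "2 * card M \<le> card (S - {u})" using matching_card M S unfolding A_def by blast
      moreover have "card S = Suc (card (S - {u}))" using card_Suc_Diff1[OF S u] by simp
      ultimately have "card S - 2 * card M = Suc (card (S - {u}) - 2 * card M)" by simp
      then show "f M = [:0,1:] * monom ((-1::real) ^ card M) (card (S - {u}) - 2 * card M)"
        unfolding f_def x_monom by simp
    qed
    also have "\<dots> = [:0,1:] * mpoly (S - {u}) E" unfolding mpoly_def A_def by (simp add: sum_distrib_left)
    finally show ?thesis .
  qed
  also have "(\<Sum>w\<in>N. sum f (B w)) = (\<Sum>w\<in>N. - mpoly (S - {u} - {w}) E)"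
  proof (rule sum.cong[OF refl])
    fix w assume w: "w \<in> N"
    have wS: "w \<in> S" "w \<noteq> u" using w unfolding N_def by auto
    let ?C = "matchings (S - {u} - {w}) E"
    have nin: "\<And>M. M \<in> ?C \<Longrightarrow> {u,w} \<notin> M" using matching_sub by blast
    have inj: "inj_on (insert {u,w}) ?C"
    proof
      fix M1 M2 assume "M1 \<in> ?C" "M2 \<in> ?C" "insert {u,w} M1 = insert {u,w} M2"
      then show "M1 = M2" using nin by (metis insert_ident)
    qed
    have "sum f (B w) = sum (f \<circ> insert {u,w}) ?C" unfolding B_def by (rule sum.reindex[OF inj])
    also have "\<dots> = (\<Sum>M\<in>?C. - monom ((-1::real) ^ card M) (card (S - {u} - {w}) - 2 * card M))"
    proof (rule sum.cong[OF refl])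
      fix M assume M: "M \<in> ?C"
      have finM: "finite M" using matching_finite M S by blast
      have c1: "card (insert {u,w} M) = Suc (card M)" using nin[OF M] finM by simp
      have c2: "card (S - {u} - {w}) = card S - 2" using S u wS by (simp add: card_Diff_singleton)
      have c3: "2 * card M \<le> card (S - {u} - {w})" using matching_card M S by blast
      have c4: "card S - 2 * Suc (card M) = card (S - {u} - {w}) - 2 * card M" using c2 c3 by simp
      show "(f \<circ> insert {u,w}) M = - monom ((-1::real) ^ card M) (card (S - {u} - {w}) - 2 * card M)"
        unfolding f_def o_def c1 c4 by (simp add: monom_neg)
    qed
    also have "\<dots> = - mpoly (S - {u} - {w}) E" unfolding mpoly_def by (simp add: sum_negf)
    finally show "sum f (B w) = - mpoly (S - {u} - {w}) E" .
  qed
  finally show ?thesis unfolding N_def by (simp add: sum_negf)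
qed

lemma pderiv_sum': "pderiv (sum f A) = (\<Sum>x\<in>A. pderiv (f x :: real poly))"
  using higher_pderiv_sum[of 1 f A] by simp

lemma matchings_empty: "matchings {} E = {{}}"
  unfolding matchings_def medges_def by auto

lemma mpoly_empty: "mpoly {} E = 1"
  unfolding mpoly_def matchings_empty by (simp add: one_pCons monom_0)

lemma mpoly_coeff: assumes S: "finite S" shows "coeff (mpoly S E) (card S) = 1"
proof -
  have "coeff (mpoly S E) (card S) = (\<Sum>M\<in>matchings S E. if M = {} then 1 else 0)"
    unfolding mpoly_def coeff_sum coeff_monom
  proof (rule sum.cong[OF refl])
    fix M assume M: "M \<in> matchings S E"
    have "2 * card M \<le> card S" by (rule matching_card[OF S M])
    moreover have "finite M" by (rule matching_finite[OF S M])
    ultimately have "card S - 2 * card M = card S \<longleftrightarrow> M = {}"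
      using card_0_eq[of M] by linarith
    then show "(if card S - 2 * card M = card S then (-1::real) ^ card M else 0) = (if M = {} then 1 else 0)"
      by auto
  qed
  also have "\<dots> = 1" using finite_matchings[OF S]
    by (simp add: sum.delta matchings_def)
  finally show ?thesis .
qed

lemma mpoly_nz: "finite S \<Longrightarrow> mpoly S E \<noteq> 0"
  using mpoly_coeff by force

lemma mpoly_pderiv: "finite S \<Longrightarrow> pderiv (mpoly S E) = (\<Sum>v\<in>S. mpoly (S - {v}) E)"
proof (induction "card S" arbitrary: S rule: less_induct)
  case less
  show ?case
  proof (cases "S = {}")
    case True then show ?thesis by (simp add: mpoly_empty)
  next
    case False
    then obtain u where u: "u \<in> S" by blast
    have S: "finite S" by (rule less.prems)
    define N where "N = {w\<in>S - {u}. E u w}"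
    define g where "g = (\<lambda>a w. mpoly (S - {u,a,w}) E)"
    have IH1: "pderiv (mpoly (S - {u}) E) = (\<Sum>a\<in>S - {u}. mpoly (S - {u} - {a}) E)"
    proof -
      have c: "card (S - {u}) < card S" by (rule card_Diff1_less[OF S u])
      show ?thesis using less.hyps[of "S - {u}", OF c] S by simp
    qed
    have IH2: "pderiv (mpoly (S - {u} - {w}) E) = (\<Sum>a\<in>S - {u} - {w}. mpoly (S - {u} - {w} - {a}) E)"
      if "w \<in> N" for w
    proof -
      have "card (S - {u} - {w}) < card S" using S u
        by (metis Diff_subset card_Diff1_less card_mono finite_Diff le_less_trans)
      then show ?thesis using less.hyps[of "S - {u} - {w}"] S by simp
    qed
    have L: "pderiv (mpoly S E) = mpoly (S - {u}) E + [:0,1:] * (\<Sum>a\<in>S - {u}. mpoly (S - {u} - {a}) E)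
               - (\<Sum>w\<in>N. \<Sum>a\<in>S - {u} - {w}. g a w)"
    proof -
      have "pderiv (mpoly S E) = pderiv ([:0,1:] * mpoly (S - {u}) E) - (\<Sum>w\<in>N. pderiv (mpoly (S - {u} - {w}) E))"
        unfolding mpoly_rec[OF S u] N_def by (simp add: pderiv_diff pderiv_sum')
      also have "pderiv ([:0,1:] * mpoly (S - {u}) E) = mpoly (S - {u}) E + [:0,1:] * pderiv (mpoly (S - {u}) E)"
        by (simp add: pderiv_mult pderiv_pCons)
      also have "(\<Sum>w\<in>N. pderiv (mpoly (S - {u} - {w}) E)) = (\<Sum>w\<in>N. \<Sum>a\<in>S - {u} - {w}. g a w)"
      proof (rule sum.cong[OF refl])
        fix w assume w: "w \<in> N"
        show "pderiv (mpoly (S - {u} - {w}) E) = (\<Sum>a\<in>S - {u} - {w}. g a w)"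
        proof -
          have "\<And>a. S - {u} - {w} - {a} = S - {u,a,w}" by blast
          then show ?thesis unfolding IH2[OF w] g_def by simp
        qed
      qed
      finally show ?thesis unfolding IH1 .
    qed
    have R: "(\<Sum>v\<in>S. mpoly (S - {v}) E) = mpoly (S - {u}) E + (\<Sum>a\<in>S - {u}. mpoly (S - {a}) E)"
      using S u by (simp add: sum.remove)
    have R2: "(\<Sum>a\<in>S - {u}. mpoly (S - {a}) E) = [:0,1:] * (\<Sum>a\<in>S - {u}. mpoly (S - {u} - {a}) E)
         - (\<Sum>a\<in>S - {u}. \<Sum>w\<in>{w\<in>S - {u}. w \<noteq> a \<and> E u w}. g a w)"
    proof -
      have "(\<Sum>a\<in>S - {u}. mpoly (S - {a}) E) = (\<Sum>a\<in>S - {u}. [:0,1:] * mpoly (S - {u} - {a}) E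
               - (\<Sum>w\<in>{w\<in>S - {u}. w \<noteq> a \<and> E u w}. g a w))"
      proof (rule sum.cong[OF refl])
        fix a assume a: "a \<in> S - {u}"
        have uS: "u \<in> S - {a}" using a u by auto
        have e1: "S - {a} - {u} = S - {u} - {a}" by blast
        have e2: "{w \<in> S - {a} - {u}. E u w} = {w\<in>S - {u}. w \<noteq> a \<and> E u w}" by blast
        have e3: "\<And>w. S - {a} - {u} - {w} = S - {u,a,w}" by blast
        show "mpoly (S - {a}) E = [:0,1:] * mpoly (S - {u} - {a}) E - (\<Sum>w\<in>{w\<in>S - {u}. w \<noteq> a \<and> E u w}. g a w)"
        proof -
          have fin: "finite (S - {a})" using S by simp
          have e4: "{w \<in> S - {u} - {a}. E u w} = {w\<in>S - {u}. w \<noteq> a \<and> E u w}" by blast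
          have e5: "\<And>w. S - {u} - {a} - {w} = S - {u,a,w}" by blast
          show ?thesis unfolding mpoly_rec[OF fin uS] e1 e4 e5 g_def ..
        qed
      qed
      also have "\<dots> = [:0,1:] * (\<Sum>a\<in>S - {u}. mpoly (S - {u} - {a}) E)
         - (\<Sum>a\<in>S - {u}. \<Sum>w\<in>{w\<in>S - {u}. w \<noteq> a \<and> E u w}. g a w)"
        by (simp add: sum_subtractf sum_distrib_left)
      finally show ?thesis .
    qed
    have SW: "(\<Sum>a\<in>S - {u}. \<Sum>w\<in>{w\<in>S - {u}. w \<noteq> a \<and> E u w}. g a w) = (\<Sum>w\<in>N. \<Sum>a\<in>S - {u} - {w}. g a w)"
    proof -
      have "(\<Sum>a\<in>S - {u}. \<Sum>w\<in>{w\<in>S - {u}. w \<noteq> a \<and> E u w}. g a w)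
          = (\<Sum>w\<in>S - {u}. \<Sum>a\<in>{a\<in>S - {u}. w \<noteq> a \<and> E u w}. g a w)"
        by (rule sum.swap_restrict) (use S in auto)
      also have "\<dots> = (\<Sum>w\<in>S - {u}. if E u w then (\<Sum>a\<in>S - {u} - {w}. g a w) else 0)"
      proof (rule sum.cong[OF refl])
        fix w assume "w \<in> S - {u}"
        show "(\<Sum>a\<in>{a\<in>S - {u}. w \<noteq> a \<and> E u w}. g a w) = (if E u w then (\<Sum>a\<in>S - {u} - {w}. g a w) else 0)"
        proof (cases "E u w")
          case True
          then have "{a\<in>S - {u}. w \<noteq> a \<and> E u w} = S - {u} - {w}" by blast
          then show ?thesis using True by simp
        next
          case False then show ?thesis by simp
        qed
      qed
      also have "\<dots> = (\<Sum>w\<in>N. \<Sum>a\<in>S - {u} - {w}. g a w)"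
        unfolding N_def by (rule sum.inter_filter[symmetric]) (use S in simp)
      finally show ?thesis .
    qed
    show ?thesis unfolding L R R2 SW by simp
  qed
qed
end



lemma pt_butlast_ne:
  assumes q: "q \<in> path_tree_vertices V E u" and ne: "q \<noteq> [u]"
  shows "butlast q \<noteq> []" "butlast q \<in> path_tree_vertices V E u" "q = butlast q @ [last q]"
proof -
  have qne: "q \<noteq> []" and hq: "hd q = u" using q unfolding ptv_iff by auto
  have "length q \<noteq> 1" using ne qne hq by (cases q) auto
  then show bne: "butlast q \<noteq> []" using qne by (cases q rule: rev_cases) auto
  show qq: "q = butlast q @ [last q]" using qne by simp
  show "butlast q \<in> path_tree_vertices V E u" using pt_prefix[of "butlast q" "last q"] qq q bne by simp
qed

context gr
begin

lemma pt_poly_id: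
  assumes S: "finite S" and v: "v \<in> S" and q: "q \<in> path_tree_vertices S E v"
  shows "[:0,1:] * mpoly (S - set q) E - (\<Sum>q'\<in>{q'\<in>path_tree_vertices S E v. path_tree_adj q q'}. mpoly (S - set q') E)
     = (if q = [v] then mpoly S E else 0)"
proof -
  have qS: "set q \<subseteq> S" "distinct q" using q unfolding ptv_iff by auto
  have ch: "\<And>w. S - set (q @ [w]) = S - set q - {w}" by auto
  have ns: "(\<Sum>q'\<in>{q'\<in>path_tree_vertices S E v. path_tree_adj q q'}. mpoly (S - set q') E) =
     (\<Sum>w\<in>{w \<in> S - set q. E (last q) w}. mpoly (S - set q - {w}) E) + (if q = [v] then 0 else mpoly (S - set (butlast q)) E)"
    unfolding nbr_sum[OF q S] ch ..
  show ?thesis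
  proof (cases "q = [v]")
    case True
    show ?thesis unfolding ns using True mpoly_rec[OF S v] by simp
  next
    case False
    note bl = pt_butlast_ne[OF q False]
    define b where "b = butlast q"
    define l where "l = last q"
    have qbl: "q = b @ [l]" using bl(3) unfolding b_def l_def .
    have lS: "l \<in> S - set b" using qS qbl by auto
    have fin: "finite (S - set b)" using S by simp
    have e1: "S - set b - {l} = S - set q" using qbl by auto
    have rec: "mpoly (S - set b) E = [:0,1:] * mpoly (S - set q) E - (\<Sum>w\<in>{w \<in> S - set q. E l w}. mpoly (S - set q - {w}) E)"
      using mpoly_rec[OF fin lS] unfolding e1 .
    show ?thesis unfolding ns using False rec unfolding b_def l_def by simp
  qed
qed


lemma atom_lim_both:
  assumes S: "finite S" and v: "v \<in> S"
  shows "((\<lambda>x. poly ([:-\<theta>,1:] * mpoly (S - {v}) E) x / poly (mpoly S E) x) \<longlongrightarrow> matching_atom S E v \<theta>) (at \<theta>)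
         \<and> matching_atom S E v \<theta> \<ge> 0"
proof -
  define P where "P = path_tree_vertices S E v"
  define mu where "mu = mpoly S E"
  define nq where "nq = (\<lambda>q. mpoly (S - set q) E)"
  define ee where "ee = (\<lambda>q::'a list. if q = [v] then 1 else (0::real))"
  have finP: "finite P" unfolding P_def by (rule pt_finite[OF S])
  have rootP: "[v] \<in> P" unfolding P_def by (rule pt_root[OF v])
  have mu0: "mu \<noteq> 0" unfolding mu_def by (rule mpoly_nz[OF S])
  have nq0: "\<And>q. nq q \<noteq> 0" unfolding nq_def using S by (simp add: mpoly_nz)
  have Rs: "\<And>a b. path_tree_adj a b = path_tree_adj b a" by (rule adj_sym)
  define m where "m = order \<theta> mu"
  have lin0: "[:-\<theta>,1:] \<noteq> (0::real poly)" by simp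
  have ident: "x * (poly (nq q) x / poly mu x) - (\<Sum>q'\<in>{q'\<in>P. path_tree_adj q q'}. poly (nq q') x / poly mu x) = ee q"
    if q: "q \<in> P" and nz: "poly mu x \<noteq> 0" for q x
  proof -
    have h: "x * poly (nq q) x - (\<Sum>q'\<in>{q'\<in>P. path_tree_adj q q'}. poly (nq q') x) = (if q = [v] then poly mu x else 0)"
      using arg_cong[OF pt_poly_id[OF S v q[unfolded P_def]], of "\<lambda>p. poly p x"]
      unfolding nq_def mu_def P_def by (simp add: poly_sum)
    have "x * (poly (nq q) x / poly mu x) - (\<Sum>q'\<in>{q'\<in>P. path_tree_adj q q'}. poly (nq q') x / poly mu x)
        = (x * poly (nq q) x - (\<Sum>q'\<in>{q'\<in>P. path_tree_adj q q'}. poly (nq q') x)) / poly mu x"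
      by (simp add: diff_divide_distrib sum_divide_distrib)
    also have "\<dots> = ee q" unfolding h ee_def using nz by simp
    finally show ?thesis .
  qed
  have evmu: "eventually (\<lambda>x. poly mu x \<noteq> 0) (at \<theta>)" by (rule eventually_poly_nz[OF mu0])
  have ident_s: "eventually (\<lambda>x. \<forall>q\<in>P. x * (poly ([:-\<theta>,1:] ^ Suc c * nq q) x / poly mu x)
       - (\<Sum>q'\<in>{q'\<in>P. path_tree_adj q q'}. poly ([:-\<theta>,1:] ^ Suc c * nq q') x / poly mu x) = (x - \<theta>) ^ Suc c * ee q) (at \<theta>)"
    for c
    using evmu
  proof eventually_elim
    case (elim x)
    show ?case
    proof
      fix q assume q: "q \<in> P"
      have e: "\<And>q. poly ([:-\<theta>,1:] ^ Suc c * nq q) x / poly mu x = (x - \<theta>) ^ Suc c * (poly (nq q) x / poly mu x)"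
        by (simp add: poly_lin_pow del: power_Suc)
      show "x * (poly ([:-\<theta>,1:] ^ Suc c * nq q) x / poly mu x)
       - (\<Sum>q'\<in>{q'\<in>P. path_tree_adj q q'}. poly ([:-\<theta>,1:] ^ Suc c * nq q') x / poly mu x) = (x - \<theta>) ^ Suc c * ee q"
        unfolding e ident[OF q elim, symmetric]
        by (simp add: sum_distrib_left algebra_simps del: power_Suc)
    qed
  qed
  have ordn: "order \<theta> ([:-\<theta>,1:] ^ Suc c * nq q) = Suc c + order \<theta> (nq q)" for c q
    using nq0[of q] by (subst order_mult) (simp_all add: order_power_n_n del: power_Suc)
  have stepA: "\<forall>q\<in>P. m \<le> Suc (order \<theta> (nq q))"
  proof (rule ccontr)
    assume "\<not> (\<forall>q\<in>P. m \<le> Suc (order \<theta> (nq q)))"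
    then obtain q1 where q1: "q1 \<in> P" "Suc (order \<theta> (nq q1)) < m" by auto
    define d where "d = Max ((\<lambda>q. m - Suc (order \<theta> (nq q))) ` P)"
    have dge: "\<And>q. q \<in> P \<Longrightarrow> m - Suc (order \<theta> (nq q)) \<le> d" unfolding d_def using finP by simp
    have "d \<in> (\<lambda>q. m - Suc (order \<theta> (nq q))) ` P"
      unfolding d_def using finP rootP by (intro Max_in) auto
    then obtain q0 where q0: "q0 \<in> P" "d = m - Suc (order \<theta> (nq q0))" by blast
    have dpos: "d > 0" using dge[OF q1(1)] q1(2) by simp
    have ex: "\<exists>L. ((\<lambda>x. poly ([:-\<theta>,1:] ^ Suc d * nq q) x / poly mu x) \<longlongrightarrow> L) (at \<theta>) \<and> (L \<noteq> 0 \<longleftrightarrow> Suc d + order \<theta> (nq q) = m)"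
      if q: "q \<in> P" for q
    proof -
      have o: "order \<theta> mu \<le> order \<theta> ([:-\<theta>,1:] ^ Suc d * nq q)" using dge[OF q] unfolding ordn m_def by simp
      have nz: "[:-\<theta>,1:] ^ Suc d * nq q \<noteq> 0" using nq0[of q] lin0 by (metis mult_eq_0_iff power_eq_0_iff)
      show ?thesis using ratio_lim[OF nz mu0 o] unfolding ordn m_def by simp
    qed
    define vv where "vv = (\<lambda>q. SOME L. ((\<lambda>x. poly ([:-\<theta>,1:] ^ Suc d * nq q) x / poly mu x) \<longlongrightarrow> L) (at \<theta>) \<and> (L \<noteq> 0 \<longleftrightarrow> Suc d + order \<theta> (nq q) = m))"
    have vv: "((\<lambda>x. poly ([:-\<theta>,1:] ^ Suc d * nq q) x / poly mu x) \<longlongrightarrow> vv q) (at \<theta>) \<and> (vv q \<noteq> 0 \<longleftrightarrow> Suc d + order \<theta> (nq q) = m)"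
      if q: "q \<in> P" for q
      unfolding vv_def by (rule someI_ex[OF ex[OF q]])
    have eig: "\<forall>q\<in>P. (\<Sum>q'\<in>{q'\<in>P. path_tree_adj q q'}. vv q') = \<theta> * vv q"
      by (rule limit_eigen1[OF finP Rs _ ident_s[of d]]) (use vv in blast)
    have "(\<Sum>q\<in>P. vv q * vv q) = (if d = 0 then (\<Sum>q\<in>P. ee q * vv q) else 0)"
      by (rule limit_eigen2[OF finP Rs _ ident_s[of d] eig]) (use vv in blast)
    then have "(\<Sum>q\<in>P. vv q * vv q) = 0" using dpos by simp
    then have "\<forall>q\<in>P. vv q * vv q = 0" using finP by (subst (asm) sum_nonneg_eq_0_iff) auto
    then have "vv q0 = 0" using q0(1) by simp
    moreover have "Suc d + order \<theta> (nq q0) = m" using q0(2) dpos by simp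
    ultimately show False using vv[OF q0(1)] by simp
  qed
  have ex0: "\<exists>L. ((\<lambda>x. poly ([:-\<theta>,1:] ^ Suc 0 * nq q) x / poly mu x) \<longlongrightarrow> L) (at \<theta>)"
    if q: "q \<in> P" for q
  proof -
    have o: "order \<theta> mu \<le> order \<theta> ([:-\<theta>,1:] ^ Suc 0 * nq q)" using stepA q unfolding ordn m_def by simp
    have nz: "[:-\<theta>,1:] ^ Suc 0 * nq q \<noteq> 0" using nq0[of q] lin0 by (metis mult_eq_0_iff power_eq_0_iff)
    show ?thesis using ratio_lim[OF nz mu0 o] by blast
  qed
  define pp where "pp = (\<lambda>q. if q \<in> P then (SOME L. ((\<lambda>x. poly ([:-\<theta>,1:] ^ Suc 0 * nq q) x / poly mu x) \<longlongrightarrow> L) (at \<theta>)) else 0)"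
  have pplim: "((\<lambda>x. poly ([:-\<theta>,1:] ^ Suc 0 * nq q) x / poly mu x) \<longlongrightarrow> pp q) (at \<theta>)" if q: "q \<in> P" for q
    unfolding pp_def using q someI_ex[OF ex0[OF q]] by simp
  have E1: "\<forall>q\<in>P. (\<Sum>q'\<in>{q'\<in>P. path_tree_adj q q'}. pp q') = \<theta> * pp q"
    by (rule limit_eigen1[OF finP Rs pplim ident_s[of 0]])
  have E2: "(\<Sum>q\<in>P. pp q * k q) = k [v]" if k: "\<forall>q\<in>P. (\<Sum>q'\<in>{q'\<in>P. path_tree_adj q q'}. k q') = \<theta> * k q" for k
  proof -
    have "(\<Sum>q\<in>P. pp q * k q) = (\<Sum>q\<in>P. ee q * k q)"
      using limit_eigen2[OF finP Rs pplim ident_s[of 0] k] by simp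
    also have "\<dots> = (\<Sum>q\<in>P. if q = [v] then k q else 0)" by (rule sum.cong) (auto simp: ee_def)
    also have "\<dots> = k [v]" using finP rootP by (simp add: sum.delta)
    finally show ?thesis .
  qed
  define K where "K = eigenspace_pt S E v \<theta>"
  have Kiff: "g \<in> K \<longleftrightarrow> (\<forall>xs. xs \<notin> P \<longrightarrow> g xs = 0) \<and> (\<forall>q\<in>P. (\<Sum>q'\<in>{q'\<in>P. path_tree_adj q q'}. g q') = \<theta> * g q)" for g
    unfolding K_def eigenspace_pt_def path_tree_op_def P_def by simp
  define e where "e = (\<lambda>xs. if xs = [v] \<and> xs \<in> P then 1 else 0 :: real)"
  have sum_e: "(\<Sum>xs\<in>P. e xs * g xs) = g [v]" for g
  proof -
    have "(\<Sum>xs\<in>P. e xs * g xs) = (\<Sum>q\<in>P. if q = [v] then g q else 0)" by (rule sum.cong) (auto simp: e_def)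
    also have "\<dots> = g [v]" using finP rootP by (simp add: sum.delta)
    finally show ?thesis .
  qed
  have ppK: "pp \<in> K" unfolding Kiff using E1 by (simp add: pp_def)
  have orth: "(\<Sum>xs\<in>P. (e xs - p xs) * g xs) = g [v] - (\<Sum>xs\<in>P. p xs * g xs)" for p g
    using sum_e[of g] by (simp add: left_diff_distrib sum_subtractf)
  have ppo: "\<forall>g\<in>K. (\<Sum>xs\<in>P. (e xs - pp xs) * g xs) = 0"
    unfolding orth using E2 Kiff by simp
  have THE: "(THE p. p \<in> K \<and> (\<forall>g\<in>K. (\<Sum>xs\<in>P. (e xs - p xs) * g xs) = 0)) = pp"
  proof (rule the_equality)
    show "pp \<in> K \<and> (\<forall>g\<in>K. (\<Sum>xs\<in>P. (e xs - pp xs) * g xs) = 0)" using ppK ppo by simp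
  next
    fix p assume p: "p \<in> K \<and> (\<forall>g\<in>K. (\<Sum>xs\<in>P. (e xs - p xs) * g xs) = 0)"
    define dl where "dl = (\<lambda>xs. p xs - pp xs)"
    have dlK: "dl \<in> K" using p ppK unfolding Kiff dl_def by (simp add: sum_subtractf algebra_simps)
    have "(\<Sum>xs\<in>P. (e xs - p xs) * dl xs) = 0" using p dlK by blast
    moreover have "(\<Sum>xs\<in>P. (e xs - pp xs) * dl xs) = 0" using ppo dlK by blast
    ultimately have "(\<Sum>xs\<in>P. (e xs - pp xs) * dl xs) - (\<Sum>xs\<in>P. (e xs - p xs) * dl xs) = 0" by simp
    then have "(\<Sum>xs\<in>P. dl xs * dl xs) = 0"
      by (simp add: sum_subtractf[symmetric] dl_def algebra_simps)
    then have "\<forall>xs\<in>P. dl xs * dl xs = 0" using finP by (subst (asm) sum_nonneg_eq_0_iff) auto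
    then have "\<forall>xs\<in>P. p xs = pp xs" unfolding dl_def by simp
    moreover have "\<forall>xs. xs \<notin> P \<longrightarrow> p xs = pp xs" using p ppK unfolding Kiff by simp
    ultimately show "p = pp" by (intro ext) metis
  qed
  have atom: "matching_atom S E v \<theta> = pp [v]"
    unfolding matching_atom_def Let_def
    using THE sum_e unfolding K_def e_def P_def by simp
  have nonneg: "pp [v] \<ge> 0"
  proof -
    have "pp [v] = (\<Sum>q\<in>P. pp q * pp q)" using E2[OF E1] by simp
    also have "\<dots> \<ge> 0" by (intro sum_nonneg) simp
    finally show ?thesis by simp
  qed
  have "((\<lambda>x. poly ([:-\<theta>,1:] ^ Suc 0 * nq [v]) x / poly mu x) \<longlongrightarrow> pp [v]) (at \<theta>)" by (rule pplim[OF rootP])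
  then show ?thesis unfolding atom nq_def mu_def using nonneg by simp
qed


lemma atom_sum:
  assumes S: "finite S"
  shows "(\<Sum>v\<in>S. matching_atom S E v \<theta>) = real (order \<theta> (mpoly S E))"
proof -
  have L1: "((\<lambda>x. \<Sum>v\<in>S. poly ([:-\<theta>,1:] * mpoly (S - {v}) E) x / poly (mpoly S E) x) \<longlongrightarrow> (\<Sum>v\<in>S. matching_atom S E v \<theta>)) (at \<theta>)"
    by (rule tendsto_sum) (use atom_lim_both[OF S] in blast)
  have eq: "(\<lambda>x. \<Sum>v\<in>S. poly ([:-\<theta>,1:] * mpoly (S - {v}) E) x / poly (mpoly S E) x)
          = (\<lambda>x. poly ([:-\<theta>,1:] * pderiv (mpoly S E)) x / poly (mpoly S E) x)"
    unfolding mpoly_pderiv[OF S] by (simp add: poly_sum sum_divide_distrib sum_distrib_left)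
  have L2: "((\<lambda>x. \<Sum>v\<in>S. poly ([:-\<theta>,1:] * mpoly (S - {v}) E) x / poly (mpoly S E) x) \<longlongrightarrow> real (order \<theta> (mpoly S E))) (at \<theta>)"
    unfolding eq by (rule log_deriv_lim[OF mpoly_nz[OF S]])
  show ?thesis using tendsto_unique[OF _ L1 L2] by simp
qed

lemma ord_lin: "p \<noteq> 0 \<Longrightarrow> order a ([:-a,1:] * p) = Suc (order a (p::real poly))"
proof -
  assume p: "p \<noteq> 0"
  have "order a ([:-a,1:] * p) = order a [:-a,1:] + order a p"
    using p by (intro order_mult no_zero_divisors) simp_all
  moreover have "order a [:-a,1:] = (1::nat)" using order_power_n_n[of a 1] by simp
  ultimately show ?thesis by simp
qed

lemma main_orders:
  fixes \<theta> :: real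
  assumes V: "finite V" and u: "u \<in> V"
  defines "Z \<equiv> order \<theta> (mpoly V E)" and "Z' \<equiv> order \<theta> (mpoly (V - {u}) E)"
  shows "Z \<le> Suc Z' \<and> (matching_atom V E u \<theta> \<noteq> 0 \<longleftrightarrow> Suc Z' = Z)"
    and "Z' \<le> Suc Z \<and> (nbr_atom_sum V E \<theta> u \<noteq> 0 \<longleftrightarrow> Suc Z = Z')"
proof -
  have fin': "finite (V - {u})" using V by simp
  have n1: "[:-\<theta>,1:] * mpoly (V - {u}) E \<noteq> 0" using mpoly_nz[OF fin'] by (intro no_zero_divisors) simp_all
  have n2: "[:-\<theta>,1:] * mpoly V E \<noteq> 0" using mpoly_nz[OF V] by (intro no_zero_divisors) simp_all
  show "Z \<le> Suc Z' \<and> (matching_atom V E u \<theta> \<noteq> 0 \<longleftrightarrow> Suc Z' = Z)"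
    using ratio_lim_conv[OF n1 mpoly_nz[OF V] conjunct1[OF atom_lim_both[OF V u]]]
    unfolding Z_def Z'_def ord_lin[OF mpoly_nz[OF fin']] by auto
  define N where "N = {w\<in>V - {u}. E u w}"
  have finN: "finite N" using V unfolding N_def by simp
  have nb: "nbr_atom_sum V E \<theta> u = (\<Sum>w\<in>N. matching_atom (V - {u}) E w \<theta>)"
  proof -
    have "{v\<in>V. E u v} = N" unfolding N_def using irr by auto
    then show ?thesis unfolding nbr_atom_sum_def by simp
  qed
  have Lw: "((\<lambda>x. poly ([:-\<theta>,1:] * mpoly (V - {u} - {w}) E) x / poly (mpoly (V - {u}) E) x) \<longlongrightarrow> matching_atom (V - {u}) E w \<theta>) (at \<theta>)"
    if w: "w \<in> N" for w
    using conjunct1[OF atom_lim_both[OF fin', of w]] w unfolding N_def by simp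
  have L1: "((\<lambda>x. (x - \<theta>) * x - (\<Sum>w\<in>N. poly ([:-\<theta>,1:] * mpoly (V - {u} - {w}) E) x / poly (mpoly (V - {u}) E) x))
      \<longlongrightarrow> (\<theta> - \<theta>) * \<theta> - (\<Sum>w\<in>N. matching_atom (V - {u}) E w \<theta>)) (at \<theta>)"
  proof -
    have "((\<lambda>x. \<Sum>w\<in>N. poly ([:-\<theta>,1:] * mpoly (V - {u} - {w}) E) x / poly (mpoly (V - {u}) E) x)
       \<longlongrightarrow> (\<Sum>w\<in>N. matching_atom (V - {u}) E w \<theta>)) (at \<theta>)"
      by (rule tendsto_sum) (rule Lw)
    then show ?thesis
      by (intro tendsto_diff[OF tendsto_mult[OF tendsto_diff[OF tendsto_ident_at tendsto_const] tendsto_ident_at]])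
  qed
  have ev: "eventually (\<lambda>x. (x - \<theta>) * x - (\<Sum>w\<in>N. poly ([:-\<theta>,1:] * mpoly (V - {u} - {w}) E) x / poly (mpoly (V - {u}) E) x)
      = poly ([:-\<theta>,1:] * mpoly V E) x / poly (mpoly (V - {u}) E) x) (at \<theta>)"
    using eventually_poly_nz[OF mpoly_nz[OF fin']]
  proof eventually_elim
    case (elim x)
    have "poly (mpoly V E) x = x * poly (mpoly (V - {u}) E) x - (\<Sum>w\<in>N. poly (mpoly (V - {u} - {w}) E) x)"
      unfolding N_def by (subst mpoly_rec[OF V u]) (simp add: poly_sum)
    define D where "D = poly (mpoly (V - {u}) E) x"
    define Sg where "Sg = (\<Sum>w\<in>N. poly (mpoly (V - {u} - {w}) E) x)"
    have D: "D \<noteq> 0" using elim unfolding D_def .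
    have s1: "(\<Sum>w\<in>N. poly ([:-\<theta>,1:] * mpoly (V - {u} - {w}) E) x / poly (mpoly (V - {u}) E) x) = (x - \<theta>) * Sg / D"
      unfolding Sg_def D_def by (simp add: sum_divide_distrib sum_distrib_left algebra_simps)
    have s2: "poly ([:-\<theta>,1:] * mpoly V E) x / poly (mpoly (V - {u}) E) x = (x - \<theta>) * (x * D - Sg) / D"
    proof -
      have pl: "poly ([:-\<theta>,1:] * mpoly V E) x = (x - \<theta>) * poly (mpoly V E) x" by (simp add: algebra_simps)
      have pm: "poly (mpoly V E) x = x * D - Sg" using \<open>poly (mpoly V E) x = _\<close> unfolding D_def Sg_def .
      show ?thesis unfolding pl pm D_def[symmetric] ..
    qed
    show ?case unfolding s1 s2 using D by (simp add: field_simps)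
  qed
  have L2: "((\<lambda>x. poly ([:-\<theta>,1:] * mpoly V E) x / poly (mpoly (V - {u}) E) x) \<longlongrightarrow> - nbr_atom_sum V E \<theta> u) (at \<theta>)"
    using tendsto_cong[OF ev] L1 unfolding nb by simp
  show "Z' \<le> Suc Z \<and> (nbr_atom_sum V E \<theta> u \<noteq> 0 \<longleftrightarrow> Suc Z = Z')"
    using ratio_lim_conv[OF n2 mpoly_nz[OF fin'] L2]
    unfolding Z_def Z'_def ord_lin[OF mpoly_nz[OF V]] by auto
qed

end

theorem lemma3p16:
  fixes V :: "'a set" and E :: "'a \<Rightarrow> 'a \<Rightarrow> bool" and u :: 'a
    and \<theta> :: real and D :: nat
  assumes finV: "finite V"
    and edges: "\<And>x y. E x y \<Longrightarrow> x \<in> V \<and> y \<in> V"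
    and sym: "\<And>x y. E x y \<Longrightarrow> E y x"
    and irrefl: "\<And>x. \<not> E x x"
    and deg: "\<And>x. x \<in> V \<Longrightarrow> card {y\<in>V. E x y} \<le> D"
    and uV: "u \<in> V"
  shows "(positive_vtx V E \<theta> u \<longrightarrow>
            (\<Sum>v\<in>V - {u}. matching_atom (V - {u}) E v \<theta> - matching_atom V E v \<theta>) = 1)
       \<and> (neutral_vtx V E \<theta> u \<longrightarrow>
            (\<Sum>v\<in>V - {u}. matching_atom (V - {u}) E v \<theta> - matching_atom V E v \<theta>) = 0)
       \<and> (essential V E \<theta> u \<longrightarrow>
            (\<Sum>v\<in>V. (if v = u then 0 else matching_atom (V - {u}) E v \<theta>)
                       - matching_atom V E v \<theta>) = -1)"
proof -
  interpret g: gr E by unfold_locales (use sym irrefl in auto)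
  define Z where "Z = order \<theta> (mpoly V E)"
  define Z' where "Z' = order \<theta> (mpoly (V - {u}) E)"
  have o1: "Z \<le> Suc Z' \<and> (matching_atom V E u \<theta> \<noteq> 0 \<longleftrightarrow> Suc Z' = Z)"
    using g.main_orders(1)[OF finV uV] unfolding Z_def Z'_def .
  have o2: "Z' \<le> Suc Z \<and> (nbr_atom_sum V E \<theta> u \<noteq> 0 \<longleftrightarrow> Suc Z = Z')"
    using g.main_orders(2)[OF finV uV] unfolding Z_def Z'_def .
  have s1: "(\<Sum>v\<in>V. matching_atom V E v \<theta>) = real Z" using g.atom_sum[OF finV] unfolding Z_def .
  have fin': "finite (V - {u})" using finV by simp
  have s2: "(\<Sum>v\<in>V - {u}. matching_atom (V - {u}) E v \<theta>) = real Z'" using g.atom_sum[OF fin'] unfolding Z'_def .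
  have a0: "matching_atom V E u \<theta> \<ge> 0" using g.atom_lim_both[OF finV uV] by blast
  have spl: "(\<Sum>v\<in>V. matching_atom V E v \<theta>) = matching_atom V E u \<theta> + (\<Sum>v\<in>V - {u}. matching_atom V E v \<theta>)"
    by (rule sum.remove[OF finV uV])
  have D1: "(\<Sum>v\<in>V - {u}. matching_atom (V - {u}) E v \<theta> - matching_atom V E v \<theta>) = real Z' - real Z + matching_atom V E u \<theta>"
    using s1 s2 spl by (simp add: sum_subtractf)
  have D3: "(\<Sum>v\<in>V. (if v = u then 0 else matching_atom (V - {u}) E v \<theta>) - matching_atom V E v \<theta>) = real Z' - real Z"
  proof -
    have "(\<Sum>v\<in>V. (if v = u then 0 else matching_atom (V - {u}) E v \<theta>)) =
        (if u = u then 0 else matching_atom (V - {u}) E u \<theta>) + (\<Sum>v\<in>V - {u}. (if v = u then 0 else matching_atom (V - {u}) E v \<theta>))"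
      by (rule sum.remove[OF finV uV])
    also have "\<dots> = (\<Sum>v\<in>V - {u}. matching_atom (V - {u}) E v \<theta>)" by simp
    finally have "(\<Sum>v\<in>V. (if v = u then 0 else matching_atom (V - {u}) E v \<theta>)) = real Z'" using s2 by simp
    then show ?thesis using s1 by (simp add: sum_subtractf)
  qed
  show ?thesis
  proof (intro conjI impI)
    assume "positive_vtx V E \<theta> u"
    then have "nbr_atom_sum V E \<theta> u \<noteq> 0" unfolding positive_vtx_def by simp
    then have zz: "Z' = Suc Z" using o2 by simp
    then have "matching_atom V E u \<theta> = 0" using o1 by auto
    then show "(\<Sum>v\<in>V - {u}. matching_atom (V - {u}) E v \<theta> - matching_atom V E v \<theta>) = 1"
      unfolding D1 zz by simp
  next
    assume "neutral_vtx V E \<theta> u"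
    then have n0: "nbr_atom_sum V E \<theta> u = 0" and ne: "\<not> matching_atom V E u \<theta> > 0"
      unfolding neutral_vtx_def essential_def by auto
    then have a00: "matching_atom V E u \<theta> = 0" using a0 by simp
    then have "Z = Z'" using o1 o2 n0 by auto
    then show "(\<Sum>v\<in>V - {u}. matching_atom (V - {u}) E v \<theta> - matching_atom V E v \<theta>) = 0"
      unfolding D1 using a00 by simp
  next
    assume "essential V E \<theta> u"
    then have "matching_atom V E u \<theta> \<noteq> 0" unfolding essential_def by simp
    then have "Z = Suc Z'" using o1 by simp
    then show "(\<Sum>v\<in>V. (if v = u then 0 else matching_atom (V - {u}) E v \<theta>) - matching_atom V E v \<theta>) = -1"
      unfolding D3 by simp
  qed
qed

end
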